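(* (a) Every NSS Hausdorff topological group is STAP. (c) If $(D_i)_{i\in\mathbb N}$ are nontrivial finite discrete abelian groups and $H=\{g\in\prod_i D_i:\{i:g(i)\ne e_{D_i}\}\text{ finite}\}$ carries the topology induced from the product topology, then $H$ is a countable metrizable precompact abelian group which is HTAP but not NSS.
   Context: A topological group $G$ (neutral element $e$) is NSS if some neighborhood of $e$ contains no nontrivial subgroup of $G$. $\prod_{k=1}^n a_k=a_1\cdots a_n$. A sequence $(g_n)$ in $G$ is hyper-multipliable if for every integer sequence $(m_n)$ the sequence $\left(\prod_{k=1}^n g_k^{m_k}\right)_n$ converges in $G$; hyper-converging if $g_n^{m_n}\to e$ for every integer sequence $(m_n)$. $G$ is HTAP if no sequence of pairwise distinct elements of $G$ is hyper-multipliable; STAP if no sequence of pairwise distinct elements of $G$ is hyper-converging. *)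

theory Defs
  imports "HOL-Analysis.Analysis" "HOL-Algebra.Product_Groups"
begin

definition topological_group :: "('a, 'b) monoid_scheme \<Rightarrow> 'a topology \<Rightarrow> bool" where
  "topological_group G T \<longleftrightarrow> group G \<and> topspace T = carrier G \<and>
     continuous_map (prod_topology T T) T (\<lambda>(x, y). x \<otimes>\<^bsub>G\<^esub> y) \<and>
     continuous_map T T (\<lambda>x. inv\<^bsub>G\<^esub> x)"

definition NSS :: "('a, 'b) monoid_scheme \<Rightarrow> 'a topology \<Rightarrow> bool" where
  "NSS G T \<longleftrightarrow> (\<exists>U. openin T U \<and> \<one>\<^bsub>G\<^esub> \<in> U \<and>
     (\<forall>K. subgroup K G \<and> K \<subseteq> U \<longrightarrow> K = {\<one>\<^bsub>G\<^esub>}))"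

primrec ordered_prod :: "('a, 'b) monoid_scheme \<Rightarrow> (nat \<Rightarrow> 'a) \<Rightarrow> nat \<Rightarrow> 'a" where
  "ordered_prod G f 0 = \<one>\<^bsub>G\<^esub>"
| "ordered_prod G f (Suc n) = ordered_prod G f n \<otimes>\<^bsub>G\<^esub> f n"

definition hyper_multipliable :: "('a, 'b) monoid_scheme \<Rightarrow> 'a topology \<Rightarrow> (nat \<Rightarrow> 'a) \<Rightarrow> bool" where
  "hyper_multipliable G T g \<longleftrightarrow>
     (\<forall>m :: nat \<Rightarrow> int. \<exists>l. limitin T (ordered_prod G (\<lambda>k. g k [^]\<^bsub>G\<^esub> m k)) l sequentially)"

definition hyper_converging :: "('a, 'b) monoid_scheme \<Rightarrow> 'a topology \<Rightarrow> (nat \<Rightarrow> 'a) \<Rightarrow> bool" where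
  "hyper_converging G T g \<longleftrightarrow>
     (\<forall>m :: nat \<Rightarrow> int. limitin T (\<lambda>n. g n [^]\<^bsub>G\<^esub> m n) \<one>\<^bsub>G\<^esub> sequentially)"

definition HTAP :: "('a, 'b) monoid_scheme \<Rightarrow> 'a topology \<Rightarrow> bool" where
  "HTAP G T \<longleftrightarrow> \<not> (\<exists>g. inj g \<and> range g \<subseteq> carrier G \<and> hyper_multipliable G T g)"

definition STAP :: "('a, 'b) monoid_scheme \<Rightarrow> 'a topology \<Rightarrow> bool" where
  "STAP G T \<longleftrightarrow> \<not> (\<exists>g. inj g \<and> range g \<subseteq> carrier G \<and> hyper_converging G T g)"

definition precompact_group :: "('a, 'b) monoid_scheme \<Rightarrow> 'a topology \<Rightarrow> bool" where
  "precompact_group G T \<longleftrightarrow> (\<forall>U. openin T U \<and> \<one>\<^bsub>G\<^esub> \<in> U \<longrightarrow>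
     (\<exists>F. finite F \<and> F \<subseteq> carrier G \<and> carrier G \<subseteq> (\<Union>x\<in>F. x <#\<^bsub>G\<^esub> U)))"

end

theory Submission
  imports Defs
begin

lemma part_a:
  assumes TG: "topological_group G T" and N: "NSS G T"
  shows "STAP G T"
proof -
  have grp: "group G" using TG unfolding topological_group_def by auto
  obtain U where U: "openin T U" "\<one>\<^bsub>G\<^esub> \<in> U"
    and K: "\<And>K. subgroup K G \<Longrightarrow> K \<subseteq> U \<Longrightarrow> K = {\<one>\<^bsub>G\<^esub>}"
    using N unfolding NSS_def by blast
  show ?thesis unfolding STAP_def
  proof
    assume "\<exists>g. inj g \<and> range g \<subseteq> carrier G \<and> hyper_converging G T g"
    then obtain g where g: "inj g" "range g \<subseteq> carrier G" "hyper_converging G T g" by blast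
    define m where "m n = (if \<exists>k::int. g n [^]\<^bsub>G\<^esub> k \<notin> U then (SOME k::int. g n [^]\<^bsub>G\<^esub> k \<notin> U) else 0)" for n
    have "limitin T (\<lambda>n. g n [^]\<^bsub>G\<^esub> m n) \<one>\<^bsub>G\<^esub> sequentially"
      using g(3) unfolding hyper_converging_def by blast
    hence "eventually (\<lambda>n. g n [^]\<^bsub>G\<^esub> m n \<in> U) sequentially" using U by (auto simp: limitin_def)
    then obtain N where Nn: "\<And>n. n \<ge> N \<Longrightarrow> g n [^]\<^bsub>G\<^esub> m n \<in> U" by (auto simp: eventually_sequentially)
    have allU: "g n [^]\<^bsub>G\<^esub> (k::int) \<in> U" if "n \<ge> N" for n k
    proof (rule ccontr)
      assume a: "g n [^]\<^bsub>G\<^esub> k \<notin> U"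
      hence ex: "\<exists>k::int. g n [^]\<^bsub>G\<^esub> k \<notin> U" by blast
      hence "m n = (SOME k::int. g n [^]\<^bsub>G\<^esub> k \<notin> U)" unfolding m_def by simp
      hence "g n [^]\<^bsub>G\<^esub> m n \<notin> U" using someI_ex[OF ex] by simp
      thus False using Nn that by blast
    qed
    have triv: "g n = \<one>\<^bsub>G\<^esub>" if "n \<ge> N" for n
    proof -
      have gn: "g n \<in> carrier G" using g(2) by auto
      have gen: "generate G {g n} = {g n [^]\<^bsub>G\<^esub> (k :: int) | k. k \<in> UNIV}"
        using group.generate_pow[OF grp gn] .
      have "subgroup (generate G {g n}) G" using group.generate_is_subgroup[OF grp] gn by auto
      moreover have "generate G {g n} \<subseteq> U" using gen allU[OF that] by auto
      ultimately have "generate G {g n} = {\<one>\<^bsub>G\<^esub>}" using K by blast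
      moreover have "g n \<in> generate G {g n}" by (simp add: generate.incl)
      ultimately show ?thesis by auto
    qed
    have "g N = g (Suc N)" using triv[of N] triv[of "Suc N"] by auto
    thus False using g(1) by (auto dest: injD)
  qed
qed


context
  fixes D :: "nat \<Rightarrow> ('c, 'd) monoid_scheme"
  assumes cg: "\<And>i. comm_group (D i)"
begin

abbreviation "HH \<equiv> sum_group UNIV D"
abbreviation "PT \<equiv> product_topology (\<lambda>i. discrete_topology (carrier (D i))) UNIV"
abbreviation "TH \<equiv> subtopology PT (carrier HH)"

lemma grpD: "group (D i)" using cg[of i] by (simp add: comm_group_def)

lemma oneD: "\<one>\<^bsub>D i\<^esub> \<in> carrier (D i)"
  using grpD[of i] by (simp add: group.is_monoid monoid.one_closed)

lemma grpH: "group HH" using grpD by simp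

lemma carrH: "carrier HH = {x. (\<forall>i. x i \<in> carrier (D i)) \<and> finite {i. x i \<noteq> \<one>\<^bsub>D i\<^esub>}}"
  using carrier_sum_group[of UNIV D] grpD by (auto simp: PiE_UNIV_domain)

lemma oneH: "\<one>\<^bsub>HH\<^esub> = (\<lambda>i. \<one>\<^bsub>D i\<^esub>)" by (simp add: restrict_def)

lemma multH: "x \<otimes>\<^bsub>HH\<^esub> y = (\<lambda>i. x i \<otimes>\<^bsub>D i\<^esub> y i)" by (simp add: restrict_def)

lemma invH: "x \<in> carrier HH \<Longrightarrow> inv\<^bsub>HH\<^esub> x = (\<lambda>i. inv\<^bsub>D i\<^esub> (x i))"
  using inv_sum_group[of UNIV D x] grpD by (simp add: restrict_def)

lemma topPT: "topspace PT = {x. \<forall>i. x i \<in> carrier (D i)}"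
  by (auto simp: PiE_UNIV_domain)

lemma topTH: "topspace TH = carrier HH"
  by (auto simp: topPT carrH)

lemma coord_lim:
  assumes "limitin TH f l sequentially"
  shows "\<exists>N. \<forall>n\<ge>N. f n i = l i"
proof -
  have "limitin PT f l sequentially" using assms[unfolded limitin_subtopology] by (elim conjE)
  hence L0: "\<forall>i\<in>UNIV. limitin (discrete_topology (carrier (D i))) (\<lambda>c. f c i) (l i) sequentially"
    unfolding limitin_componentwise by (elim conjE)
  have L: "limitin (discrete_topology (carrier (D i))) (\<lambda>c. f c i) (l i) sequentially"
    using L0 by (rule bspec) simp
  hence "l i \<in> carrier (D i)" unfolding limitin_def by simp
  hence "openin (discrete_topology (carrier (D i))) {l i}" by simp
  hence "eventually (\<lambda>c. f c i \<in> {l i}) sequentially"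
    using L unfolding limitin_def by blast
  thus ?thesis by (auto simp: eventually_sequentially)
qed

lemma cylinder:
  assumes "openin TH U" "\<one>\<^bsub>HH\<^esub> \<in> U"
  shows "\<exists>n. \<forall>x\<in>carrier HH. (\<forall>i<n. x i = \<one>\<^bsub>D i\<^esub>) \<longrightarrow> x \<in> U"
proof -
  obtain V where V: "openin PT V" "U = V \<inter> carrier HH" using assms(1) by (auto simp: openin_subtopology)
  have "\<one>\<^bsub>HH\<^esub> \<in> V" using V assms(2) by auto
  then obtain W where W: "finite {i. W i \<noteq> carrier (D i)}" "\<And>i. openin (discrete_topology (carrier (D i))) (W i)"
     "\<one>\<^bsub>HH\<^esub> \<in> Pi\<^sub>E UNIV W" "Pi\<^sub>E UNIV W \<subseteq> V"
  proof -
    have "\<forall>x\<in>V. \<exists>W. finite {i \<in> UNIV. W i \<noteq> topspace (discrete_topology (carrier (D i)))} \<and>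
                 (\<forall>i \<in> UNIV. openin (discrete_topology (carrier (D i))) (W i)) \<and> x \<in> Pi\<^sub>E UNIV W \<and> Pi\<^sub>E UNIV W \<subseteq> V"
      using V(1) unfolding openin_product_topology_alt by blast
    then obtain W where "finite {i \<in> UNIV. W i \<noteq> topspace (discrete_topology (carrier (D i)))}"
        "(\<forall>i \<in> UNIV. openin (discrete_topology (carrier (D i))) (W i))" "\<one>\<^bsub>HH\<^esub> \<in> Pi\<^sub>E UNIV W" "Pi\<^sub>E UNIV W \<subseteq> V"
      using \<open>\<one>\<^bsub>HH\<^esub> \<in> V\<close> by blast
    thus thesis using that by simp
  qed
  obtain n where n: "\<And>i. i \<in> {i. W i \<noteq> carrier (D i)} \<Longrightarrow> i < n"
    using finite_nat_bounded[OF W(1)] by auto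
  show ?thesis
  proof (intro exI ballI impI)
    fix x assume x: "x \<in> carrier HH" "\<forall>i<n. x i = \<one>\<^bsub>D i\<^esub>"
    have "x \<in> Pi\<^sub>E UNIV W"
      unfolding PiE_UNIV_domain
    proof (rule Pi_I)
      fix i show "x i \<in> W i"
      proof (cases "W i = carrier (D i)")
        case True thus ?thesis using x(1) by (auto simp: carrH)
      next
        case False
        hence "i < n" using n by auto
        thus ?thesis using x(2) W(3) by (auto simp: oneH PiE_UNIV_domain)
      qed
    qed
    thus "x \<in> U" using W(4) V(2) x(1) by auto
  qed
qed


definition Kc :: "nat \<Rightarrow> (nat \<Rightarrow> 'c) set" where
  "Kc n = {x \<in> carrier HH. \<forall>i<n. x i = \<one>\<^bsub>D i\<^esub>}"

lemma Kc_subgroup: "subgroup (Kc n) HH"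
proof (rule group.subgroupI[OF grpH])
  show "Kc n \<subseteq> carrier HH" by (auto simp: Kc_def)
  show "Kc n \<noteq> {}" using monoid.one_closed[OF group.is_monoid[OF grpH]] by (auto simp: Kc_def oneH)
  fix x y assume x: "x \<in> Kc n" and y: "y \<in> Kc n"
  show "inv\<^bsub>HH\<^esub> x \<in> Kc n" using x group.inv_closed[OF grpH, of x]
    by (auto simp: Kc_def invH monoid.inv_one[OF group.is_monoid[OF grpD]])
  show "x \<otimes>\<^bsub>HH\<^esub> y \<in> Kc n" using x y monoid.m_closed[OF group.is_monoid[OF grpH], of x y]
    by (auto simp: Kc_def multH monoid.l_one[OF group.is_monoid[OF grpD]] oneD)
qed



lemma commD: "x \<in> carrier (D i) \<Longrightarrow> y \<in> carrier (D i) \<Longrightarrow> x \<otimes>\<^bsub>D i\<^esub> y = y \<otimes>\<^bsub>D i\<^esub> x"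
proof -
  interpret comm_group "D i" by (rule cg)
  show "x \<in> carrier (D i) \<Longrightarrow> y \<in> carrier (D i) \<Longrightarrow> x \<otimes>\<^bsub>D i\<^esub> y = y \<otimes>\<^bsub>D i\<^esub> x" by (rule m_comm)
qed

lemma Kc_nontriv:
  assumes "carrier (D n) \<noteq> {\<one>\<^bsub>D n\<^esub>}"
  shows "Kc n \<noteq> {\<one>\<^bsub>HH\<^esub>}"
proof -
  have "\<one>\<^bsub>D n\<^esub> \<in> carrier (D n)" by (rule oneD)
  then obtain a where a: "a \<in> carrier (D n)" "a \<noteq> \<one>\<^bsub>D n\<^esub>" using assms by blast
  define x where "x = (\<lambda>i. if i = n then a else \<one>\<^bsub>D i\<^esub>)"
  have "{i. x i \<noteq> \<one>\<^bsub>D i\<^esub>} \<subseteq> {n}" by (auto simp: x_def)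
  hence "finite {i. x i \<noteq> \<one>\<^bsub>D i\<^esub>}" using finite_subset by blast
  moreover have "\<forall>i. x i \<in> carrier (D i)" using a oneD by (auto simp: x_def)
  ultimately have "x \<in> Kc n" by (auto simp: Kc_def carrH x_def)
  moreover have "x \<noteq> \<one>\<^bsub>HH\<^esub>" using a by (auto simp: oneH x_def fun_eq_iff)
  ultimately show ?thesis by blast
qed

lemma notNSS:
  assumes "\<And>i. carrier (D i) \<noteq> {\<one>\<^bsub>D i\<^esub>}"
  shows "\<not> NSS HH TH"
  unfolding NSS_def
proof clarify
  fix U assume U: "openin TH U" "\<one>\<^bsub>HH\<^esub> \<in> U"
    and K: "\<forall>K. subgroup K HH \<and> K \<subseteq> U \<longrightarrow> K = {\<one>\<^bsub>HH\<^esub>}"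
  obtain n where n: "\<forall>x\<in>carrier HH. (\<forall>i<n. x i = \<one>\<^bsub>D i\<^esub>) \<longrightarrow> x \<in> U"
    using cylinder[OF U] by blast
  have "Kc n \<subseteq> U" using n by (auto simp: Kc_def)
  hence "Kc n = {\<one>\<^bsub>HH\<^esub>}" using K Kc_subgroup by blast
  thus False using Kc_nontriv assms by blast
qed

definition Fn :: "nat \<Rightarrow> (nat \<Rightarrow> 'c) set" where
  "Fn n = {x \<in> carrier HH. \<forall>i\<ge>n. x i = \<one>\<^bsub>D i\<^esub>}"

lemma Fn_finite:
  assumes "\<And>i. finite (carrier (D i))"
  shows "finite (Fn n)"
proof -
  have "Fn n \<subseteq> (\<lambda>f. \<lambda>i. if i < n then f i else \<one>\<^bsub>D i\<^esub>) ` (Pi\<^sub>E {..<n} (\<lambda>i. carrier (D i)))"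
  proof
    fix x assume x: "x \<in> Fn n"
    have "x = (\<lambda>i. if i < n then restrict x {..<n} i else \<one>\<^bsub>D i\<^esub>)"
      using x by (auto simp: Fn_def fun_eq_iff)
    moreover have "restrict x {..<n} \<in> Pi\<^sub>E {..<n} (\<lambda>i. carrier (D i))"
      using x by (auto simp: Fn_def carrH)
    ultimately show "x \<in> (\<lambda>f. \<lambda>i. if i < n then f i else \<one>\<^bsub>D i\<^esub>) ` (Pi\<^sub>E {..<n} (\<lambda>i. carrier (D i)))"
      by blast
  qed
  moreover have "finite (Pi\<^sub>E {..<n} (\<lambda>i. carrier (D i)))"
    using assms by (intro finite_PiE) auto
  ultimately show ?thesis using finite_subset by blast
qed

lemma carr_Fn: "carrier HH \<subseteq> (\<Union>n. Fn n)"
proof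
  fix y assume y: "y \<in> carrier HH"
  hence "finite {i. y i \<noteq> \<one>\<^bsub>D i\<^esub>}" by (simp add: carrH)
  then obtain n where "{i. y i \<noteq> \<one>\<^bsub>D i\<^esub>} \<subseteq> {..<n}"
    using finite_nat_bounded by blast
  hence "y \<in> Fn n" using y by (force simp: Fn_def)
  thus "y \<in> (\<Union>n. Fn n)" by blast
qed

lemma countableH:
  assumes "\<And>i. finite (carrier (D i))"
  shows "countable (carrier HH)"
  by (rule countable_subset[OF carr_Fn]) (auto intro: countable_finite Fn_finite[OF assms])

lemma precompactH:
  assumes "\<And>i. finite (carrier (D i))"
  shows "precompact_group HH TH"
  unfolding precompact_group_def
proof clarify
  fix U assume U: "openin TH U" "\<one>\<^bsub>HH\<^esub> \<in> U"
  obtain n where n: "\<forall>x\<in>carrier HH. (\<forall>i<n. x i = \<one>\<^bsub>D i\<^esub>) \<longrightarrow> x \<in> U"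
    using cylinder[OF U] by blast
  have "carrier HH \<subseteq> (\<Union>x\<in>Fn n. x <#\<^bsub>HH\<^esub> U)"
  proof
    fix y assume y: "y \<in> carrier HH"
    define f where "f = (\<lambda>i. if i < n then y i else \<one>\<^bsub>D i\<^esub>)"
    define u where "u = (\<lambda>i. if i < n then \<one>\<^bsub>D i\<^esub> else y i)"
    have yc: "\<And>i. y i \<in> carrier (D i)" and yf: "finite {i. y i \<noteq> \<one>\<^bsub>D i\<^esub>}" using y by (auto simp: carrH)
    have "f \<in> carrier HH" unfolding carrH
    proof (intro CollectI conjI allI)
      fix i show "f i \<in> carrier (D i)" using yc oneD by (simp add: f_def)
    next
      show "finite {i. f i \<noteq> \<one>\<^bsub>D i\<^esub>}" by (rule finite_subset[OF _ yf]) (auto simp: f_def)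
    qed
    hence fF: "f \<in> Fn n" by (auto simp: Fn_def f_def)
    have "u \<in> carrier HH" unfolding carrH
    proof (intro CollectI conjI allI)
      fix i show "u i \<in> carrier (D i)" using yc oneD by (simp add: u_def)
    next
      show "finite {i. u i \<noteq> \<one>\<^bsub>D i\<^esub>}" by (rule finite_subset[OF _ yf]) (auto simp: u_def)
    qed
    hence uU: "u \<in> U" using n by (auto simp: u_def)
    have "y = f \<otimes>\<^bsub>HH\<^esub> u"
      by (auto simp: multH fun_eq_iff f_def u_def yc group.is_monoid[OF grpD])
    hence "y \<in> f <#\<^bsub>HH\<^esub> U" using uU by (auto simp: l_coset_def)
    thus "y \<in> (\<Union>x\<in>Fn n. x <#\<^bsub>HH\<^esub> U)" using fF by blast
  qed
  moreover have "Fn n \<subseteq> carrier HH" by (auto simp: Fn_def)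
  ultimately show "\<exists>F. finite F \<and> F \<subseteq> carrier HH \<and> carrier HH \<subseteq> (\<Union>x\<in>F. x <#\<^bsub>HH\<^esub> U)"
    using Fn_finite[OF assms] by blast
qed

lemma commH: "comm_group HH"
  by (rule group.group_comm_groupI[OF grpH])
     (auto simp: multH carrH fun_eq_iff commD)

lemma metrH: "metrizable_space TH"
proof (rule metrizable_space_subtopology, rule metrizable_topology_D)
  have "(\<lambda>i. \<one>\<^bsub>D i\<^esub>) \<in> topspace PT" using oneD by (simp add: PiE_UNIV_domain)
  thus "topspace PT \<noteq> {}" by blast
  show "countable {i \<in> UNIV. \<nexists>a. topspace (discrete_topology (carrier (D i))) \<subseteq> {a}}"
    by (rule countable_subset[of _ UNIV]) auto
qed simp


lemma compD: "continuous_map TH (discrete_topology (carrier (D k))) (\<lambda>x. x k)"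
  by (rule continuous_map_from_subtopology[OF continuous_map_product_projection]) simp

lemma mD: "x \<in> carrier (D i) \<Longrightarrow> y \<in> carrier (D i) \<Longrightarrow> x \<otimes>\<^bsub>D i\<^esub> y \<in> carrier (D i)"
  using grpD[of i] by (simp add: group.is_monoid monoid.m_closed)

lemma iD: "x \<in> carrier (D i) \<Longrightarrow> inv\<^bsub>D i\<^esub> x \<in> carrier (D i)"
  using grpD[of i] by (simp add: group.inv_closed)

lemma tgH: "topological_group HH TH"
  unfolding topological_group_def
proof (intro conjI)
  show "group HH" by (rule grpH)
  show "topspace TH = carrier HH" by (rule topTH)
  have "continuous_map (prod_topology TH TH) TH (\<lambda>(x, y). (\<lambda>i. x i \<otimes>\<^bsub>D i\<^esub> y i))"
    unfolding continuous_map_in_subtopology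
  proof
    show "continuous_map (prod_topology TH TH) PT (\<lambda>(x, y). (\<lambda>i. x i \<otimes>\<^bsub>D i\<^esub> y i))"
      unfolding continuous_map_componentwise_UNIV
    proof
      fix k
      have c1: "continuous_map (prod_topology TH TH)
          (prod_topology (discrete_topology (carrier (D k))) (discrete_topology (carrier (D k))))
          (\<lambda>p. (fst p k, snd p k))"
        by (intro continuous_map_pairedI continuous_map_compose[OF continuous_map_fst compD, unfolded o_def]
                  continuous_map_compose[OF continuous_map_snd compD, unfolded o_def])
      have c2: "continuous_map
          (prod_topology (discrete_topology (carrier (D k))) (discrete_topology (carrier (D k))))
          (discrete_topology (carrier (D k))) (\<lambda>(a, b). a \<otimes>\<^bsub>D k\<^esub> b)"
        unfolding prod_topology_discrete_topology[symmetric] using mD by auto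
      show "continuous_map (prod_topology TH TH) (discrete_topology (carrier (D k)))
          (\<lambda>p. (case p of (x, y) \<Rightarrow> (\<lambda>i. x i \<otimes>\<^bsub>D i\<^esub> y i)) k)"
        using continuous_map_compose[OF c1 c2] by (simp add: o_def case_prod_beta)
    qed
    show "(\<lambda>(x, y). (\<lambda>i. x i \<otimes>\<^bsub>D i\<^esub> y i)) \<in> topspace (prod_topology TH TH) \<rightarrow> carrier HH"
    proof
      fix p assume "p \<in> topspace (prod_topology TH TH)"
      hence p: "fst p \<in> carrier HH" "snd p \<in> carrier HH" by (auto simp: topTH)
      have "(\<lambda>i. fst p i \<otimes>\<^bsub>D i\<^esub> snd p i) \<in> carrier HH"
        using monoid.m_closed[OF group.is_monoid[OF grpH] p] unfolding multH .
      thus "(\<lambda>(x, y). (\<lambda>i. x i \<otimes>\<^bsub>D i\<^esub> y i)) p \<in> carrier HH"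
        by (simp add: case_prod_beta)
    qed
  qed
  thus "continuous_map (prod_topology TH TH) TH (\<lambda>(x, y). x \<otimes>\<^bsub>HH\<^esub> y)"
    by (simp only: multH)
  have "continuous_map TH TH (\<lambda>x. (\<lambda>i. inv\<^bsub>D i\<^esub> (x i)))"
    unfolding continuous_map_in_subtopology
  proof
    show "continuous_map TH PT (\<lambda>x. (\<lambda>i. inv\<^bsub>D i\<^esub> (x i)))"
      unfolding continuous_map_componentwise_UNIV
    proof
      fix k
      have c2: "continuous_map (discrete_topology (carrier (D k))) (discrete_topology (carrier (D k)))
           (\<lambda>a. inv\<^bsub>D k\<^esub> a)" using iD by auto
      show "continuous_map TH (discrete_topology (carrier (D k))) (\<lambda>x. inv\<^bsub>D k\<^esub> (x k))"
        using continuous_map_compose[OF compD c2] by (simp add: o_def)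
    qed
    show "(\<lambda>x. (\<lambda>i. inv\<^bsub>D i\<^esub> (x i))) \<in> topspace TH \<rightarrow> carrier HH"
    proof
      fix x assume "x \<in> topspace TH"
      hence x: "x \<in> carrier HH" by (simp add: topTH)
      show "(\<lambda>i. inv\<^bsub>D i\<^esub> (x i)) \<in> carrier HH"
        using group.inv_closed[OF grpH x] invH[OF x] by simp
    qed
  qed
  thus "continuous_map TH TH (\<lambda>x. inv\<^bsub>HH\<^esub> x)"
    by (rule continuous_map_eq) (simp add: topTH invH)
qed


lemma opc: assumes "\<And>k. f k \<in> carrier HH" shows "ordered_prod HH f n \<in> carrier HH"
proof (induction n)
  case 0 show ?case using monoid.one_closed[OF group.is_monoid[OF grpH]] by (simp only: ordered_prod.simps)
next
  case (Suc n) show ?case unfolding ordered_prod.simps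
    by (rule monoid.m_closed[OF group.is_monoid[OF grpH] Suc assms])
qed

lemma opS: "ordered_prod HH f (Suc n) i = ordered_prod HH f n i \<otimes>\<^bsub>D i\<^esub> f n i"
  by (simp add: multH)

lemma op0: "ordered_prod HH f 0 i = \<one>\<^bsub>D i\<^esub>"
  by (simp add: oneH)

lemma htapH: "HTAP HH TH"
  unfolding HTAP_def
proof
  assume "\<exists>g. inj g \<and> range g \<subseteq> carrier HH \<and> hyper_multipliable HH TH g"
  then obtain g where inj: "inj g" and gcr: "range g \<subseteq> carrier HH" and hm: "hyper_multipliable HH TH g"
    by blast
  have gc: "g n \<in> carrier HH" for n using gcr by auto
  have gcD: "g n i \<in> carrier (D i)" for n i using gc[of n] by (simp add: carrH)
  have gfin: "finite {i. g n i \<noteq> \<one>\<^bsub>D i\<^esub>}" for n using gc[of n] by (simp add: carrH)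
  have ev: "\<exists>N. \<forall>n\<ge>N. g n i = \<one>\<^bsub>D i\<^esub>" for i
  proof -
    obtain l where l: "limitin TH (ordered_prod HH (\<lambda>k. g k [^]\<^bsub>HH\<^esub> (1::int))) l sequentially"
      using hm[unfolded hyper_multipliable_def, rule_format, of "\<lambda>k. 1"] by blast
    have "(\<lambda>k. g k [^]\<^bsub>HH\<^esub> (1::int)) = g" using group.int_pow_1[OF grpH] gc by auto
    with l have l': "limitin TH (ordered_prod HH g) l sequentially" by simp
    obtain N where N: "\<forall>n\<ge>N. ordered_prod HH g n i = l i" using coord_lim[OF l'] by blast
    have "g n i = \<one>\<^bsub>D i\<^esub>" if "n \<ge> N" for n
    proof -
      have pc: "ordered_prod HH g n i \<in> carrier (D i)" using opc[of g n] gc by (simp add: carrH)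
      have "ordered_prod HH g n i \<otimes>\<^bsub>D i\<^esub> g n i = ordered_prod HH g n i"
      proof -
        have e1: "ordered_prod HH g (Suc n) i = l i" by (rule N[rule_format]) (use that in simp)
        have e2: "ordered_prod HH g n i = l i" by (rule N[rule_format]) (use that in simp)
        show ?thesis using opS[of g n i] e1 e2 by metis
      qed
      thus ?thesis using group.l_cancel_one[OF grpD pc gcD] by simp
    qed
    thus ?thesis by blast
  qed
  then obtain Nf where Nf: "\<And>i n. n \<ge> Nf i \<Longrightarrow> g n i = \<one>\<^bsub>D i\<^esub>" by metis
  have fin1: "finite {n. g n = \<one>\<^bsub>HH\<^esub>}"
  proof (cases "{n. g n = \<one>\<^bsub>HH\<^esub>} = {}")
    case False
    then obtain a where a: "g a = \<one>\<^bsub>HH\<^esub>" by blast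
    have "{n. g n = \<one>\<^bsub>HH\<^esub>} \<subseteq> {a}"
    proof
      fix x assume "x \<in> {n. g n = \<one>\<^bsub>HH\<^esub>}"
      hence "g x = g a" using a by simp
      thus "x \<in> {a}" using inj by (simp add: inj_eq)
    qed
    thus ?thesis using finite_subset by blast
  qed simp
  have Zinf: "infinite {n. g n \<noteq> \<one>\<^bsub>HH\<^esub>}"
  proof -
    have "{n. g n \<noteq> \<one>\<^bsub>HH\<^esub>} = UNIV - {n. g n = \<one>\<^bsub>HH\<^esub>}" by auto
    thus ?thesis using Diff_infinite_finite[OF fin1 infinite_UNIV_nat] by simp
  qed
  define ok where "ok A n \<longleftrightarrow> g n \<noteq> \<one>\<^bsub>HH\<^esub> \<and> n \<notin> A \<and>
     (\<forall>j\<in>A. \<forall>i. g j i = \<one>\<^bsub>D i\<^esub> \<or> g n i = \<one>\<^bsub>D i\<^esub>)" for A n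
  define pick where "pick A = (LEAST n. ok A n)" for A
  have pick_ok: "ok A (pick A)" if fA: "finite A" for A
  proof -
    define U where "U = (\<Union>j\<in>A. {i. g j i \<noteq> \<one>\<^bsub>D i\<^esub>})"
    have "finite U" unfolding U_def by (rule finite_UN_I[OF fA gfin])
    hence "finite (Nf ` U)" by (rule finite_imageI)
    hence "\<exists>m. \<forall>x\<in>Nf ` U. x \<le> m" unfolding finite_nat_set_iff_bounded_le .
    then obtain b where b0: "\<forall>x\<in>Nf ` U. x \<le> b" by blast
    have b: "Nf i \<le> b" if "i \<in> U" for i using b0 that by simp
    have "infinite ({n. g n \<noteq> \<one>\<^bsub>HH\<^esub>} - (A \<union> {..<b}))"
      by (rule Diff_infinite_finite[OF finite_UnI[OF fA finite_lessThan] Zinf])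
    then obtain n where "n \<in> {n. g n \<noteq> \<one>\<^bsub>HH\<^esub>} - (A \<union> {..<b})"
      using infinite_imp_nonempty by blast
    hence n: "g n \<noteq> \<one>\<^bsub>HH\<^esub>" "n \<notin> A" "n \<ge> b" by auto
    have "ok A n" unfolding ok_def
    proof (intro conjI n(1,2) ballI allI)
      fix j i assume j: "j \<in> A"
      show "g j i = \<one>\<^bsub>D i\<^esub> \<or> g n i = \<one>\<^bsub>D i\<^esub>"
      proof (cases "g j i = \<one>\<^bsub>D i\<^esub>")
        case False
        hence "i \<in> U" using j by (auto simp: U_def)
        hence "Nf i \<le> n" using b[of i] n(3) by linarith
        thus ?thesis using Nf[of i n] by simp
      qed simp
    qed
    thus ?thesis unfolding pick_def by (rule LeastI)
  qed
  define A where "A = rec_nat {} (\<lambda>k S. insert (pick S) S)"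
  have A0: "A 0 = {}" and AS: "A (Suc k) = insert (pick (A k)) (A k)" for k by (simp_all add: A_def)
  have Afin: "finite (A k)" for k by (induction k) (simp_all add: A0 AS)
  have Acard: "card (A k) = k" for k
  proof (induction k)
    case (Suc k)
    have "pick (A k) \<notin> A k" using pick_ok[OF Afin] by (simp add: ok_def)
    thus ?case using Suc Afin[of k] by (simp add: AS)
  qed (simp add: A0)
  have Aprop: "(\<forall>a\<in>A k. g a \<noteq> \<one>\<^bsub>HH\<^esub>) \<and>
     (\<forall>a\<in>A k. \<forall>b\<in>A k. a \<noteq> b \<longrightarrow> (\<forall>i. g a i = \<one>\<^bsub>D i\<^esub> \<or> g b i = \<one>\<^bsub>D i\<^esub>))" for k
  proof (induction k)
    case (Suc k)
    have ok: "ok (A k) (pick (A k))" using pick_ok[OF Afin] .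
    show ?case unfolding AS
    proof (intro conjI ballI impI allI)
      fix a assume "a \<in> insert (pick (A k)) (A k)"
      thus "g a \<noteq> \<one>\<^bsub>HH\<^esub>" using Suc ok by (auto simp: ok_def)
    next
      fix a b i assume a: "a \<in> insert (pick (A k)) (A k)" and b: "b \<in> insert (pick (A k)) (A k)" and ab: "a \<noteq> b"
      show "g a i = \<one>\<^bsub>D i\<^esub> \<or> g b i = \<one>\<^bsub>D i\<^esub>"
        using a b ab Suc ok unfolding ok_def by blast
    qed
  qed (simp add: A0)
  have Amono: "A k \<subseteq> A k'" if "k \<le> k'" for k k'
    using lift_Suc_mono_le[of A, OF _ that] AS by blast
  define S where "S = (\<Union>k. A k)"
  have Sinf: "infinite S"
  proof
    assume fS: "finite S"
    have "A (Suc (card S)) \<subseteq> S" by (auto simp: S_def)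
    hence "card (A (Suc (card S))) \<le> card S" using card_mono[OF fS] by blast
    thus False using Acard by simp
  qed
  have Sz: "g a \<noteq> \<one>\<^bsub>HH\<^esub>" if "a \<in> S" for a using that Aprop by (auto simp: S_def)
  have Sdisj: "g a i = \<one>\<^bsub>D i\<^esub> \<or> g b i = \<one>\<^bsub>D i\<^esub>" if "a \<in> S" "b \<in> S" "a \<noteq> b" for a b i
  proof -
    have "a \<in> (\<Union>k. A k)" "b \<in> (\<Union>k. A k)" using that(1,2) by (simp_all add: S_def)
    then obtain k1 k2 where "a \<in> A k1" "b \<in> A k2" by blast
    hence "a \<in> A (max k1 k2)" "b \<in> A (max k1 k2)" using Amono by (meson max.cobounded1 max.cobounded2 subsetD)+
    thus ?thesis using Aprop that(3) by blast
  qed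
  define m where "m n = (if n \<in> S then 1 else 0 :: int)" for n
  define f where "f k = g k [^]\<^bsub>HH\<^esub> m k" for k
  obtain l where l: "limitin TH (ordered_prod HH f) l sequentially"
    using hm[unfolded hyper_multipliable_def, rule_format, of m] unfolding f_def by blast
  have lc: "l \<in> carrier HH" using l topTH by (simp add: limitin_def)
  have fcoord: "f k i = (if k \<in> S then g k i else \<one>\<^bsub>D i\<^esub>)" for k i
    using group.int_pow_1[OF grpH gc[of k]] by (simp add: f_def m_def oneH)
  have claim: "ordered_prod HH f n i = (if s < n then g s i else \<one>\<^bsub>D i\<^esub>)"
    if s: "s \<in> S" "g s i \<noteq> \<one>\<^bsub>D i\<^esub>" for s i n
  proof (induction n)
    case 0 show ?case by (simp add: op0)
  next
    case (Suc n)
    show ?case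
    proof (cases "n = s")
      case True
      thus ?thesis using Suc s(1) gcD[of s i] by (simp add: opS fcoord monoid.l_one[OF group.is_monoid[OF grpD]])
    next
      case False
      have fn: "f n i = \<one>\<^bsub>D i\<^esub>" using Sdisj[of n s i] s False by (auto simp: fcoord)
      have pc: "ordered_prod HH f n i \<in> carrier (D i)" using Suc gcD[of s i] oneD[of i] by simp
      show ?thesis using False Suc pc fn
        by (simp add: opS monoid.r_one[OF group.is_monoid[OF grpD]] less_Suc_eq)
    qed
  qed
  have lnz: "l i \<noteq> \<one>\<^bsub>D i\<^esub>" if s: "s \<in> S" "g s i \<noteq> \<one>\<^bsub>D i\<^esub>" for s i
  proof -
    obtain N where N: "\<forall>n\<ge>N. ordered_prod HH f n i = l i" using coord_lim[OF l] by blast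
    have "l i = ordered_prod HH f (max N (Suc s)) i" using N by simp
    also have "\<dots> = g s i" using claim[OF s, of "max N (Suc s)"] by (simp add: less_max_iff_disj)
    finally show ?thesis using s by simp
  qed
  define c where "c s = (SOME i. g s i \<noteq> \<one>\<^bsub>D i\<^esub>)" for s
  have cprop: "g s (c s) \<noteq> \<one>\<^bsub>D (c s)\<^esub>" if "s \<in> S" for s
  proof -
    have "\<exists>i. g s i \<noteq> \<one>\<^bsub>D i\<^esub>" using Sz[OF that] by (auto simp: oneH fun_eq_iff)
    thus ?thesis unfolding c_def by (rule someI_ex)
  qed
  have "inj_on c S"
  proof (rule inj_onI, rule ccontr)
    fix a b assume ab: "a \<in> S" "b \<in> S" "c a = c b" "a \<noteq> b"
    show False using Sdisj[OF ab(1,2,4), of "c a"] cprop[OF ab(1)] cprop[OF ab(2)] ab(3) by simp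
  qed
  hence "infinite (c ` S)" using Sinf finite_image_iff by blast
  moreover have "c ` S \<subseteq> {i. l i \<noteq> \<one>\<^bsub>D i\<^esub>}" using lnz cprop by blast
  moreover have "finite {i. l i \<noteq> \<one>\<^bsub>D i\<^esub>}" using lc by (simp add: carrH)
  ultimately show False using finite_subset by blast
qed

end

theorem theorem5p1:
  shows "(\<forall>(G :: ('a, 'b) monoid_scheme) T.
            topological_group G T \<and> Hausdorff_space T \<and> NSS G T \<longrightarrow> STAP G T)
       \<and> (\<forall>D :: nat \<Rightarrow> ('c, 'd) monoid_scheme.
            (\<forall>i. comm_group (D i) \<and> finite (carrier (D i)) \<and> carrier (D i) \<noteq> {\<one>\<^bsub>D i\<^esub>}) \<longrightarrow>
            (let H = sum_group UNIV D;
                 TH = subtopology (product_topology (\<lambda>i. discrete_topology (carrier (D i))) UNIV)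
                                  (carrier H)
             in countable (carrier H) \<and> metrizable_space TH \<and> topological_group H TH \<and>
                precompact_group H TH \<and> comm_group H \<and> HTAP H TH \<and> \<not> NSS H TH))"
proof (intro conjI allI impI)
  fix G :: "('a, 'b) monoid_scheme" and T
  assume "topological_group G T \<and> Hausdorff_space T \<and> NSS G T"
  thus "STAP G T" using part_a by blast
next
  fix D :: "nat \<Rightarrow> ('c, 'd) monoid_scheme"
  assume A: "\<forall>i. comm_group (D i) \<and> finite (carrier (D i)) \<and> carrier (D i) \<noteq> {\<one>\<^bsub>D i\<^esub>}"
  have cg: "\<And>i. comm_group (D i)" and fin: "\<And>i. finite (carrier (D i))"
    and nt: "\<And>i. carrier (D i) \<noteq> {\<one>\<^bsub>D i\<^esub>}" using A by auto
  show "let H = sum_group UNIV D;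
            TH = subtopology (product_topology (\<lambda>i. discrete_topology (carrier (D i))) UNIV) (carrier H)
        in countable (carrier H) \<and> metrizable_space TH \<and> topological_group H TH \<and>
           precompact_group H TH \<and> comm_group H \<and> HTAP H TH \<and> \<not> NSS H TH"
    unfolding Let_def
    using countableH[of D, OF cg fin] metrH[of D, OF cg] tgH[of D, OF cg] precompactH[of D, OF cg fin] commH[of D, OF cg]
          htapH[of D, OF cg] notNSS[of D, OF cg nt]
    by blast
qed

end
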